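(* Let $M$ be a $4$-dimensional manifold with local coordinates $(x^1,\dots,x^4)$, $e_i=\partial/\partial x^i$, and Riemannian metric $g$ with components \[(g_{ij})=\begin{pmatrix} A&B&C&B\\ B&A&B&C\\ C&B&A&B\\ B&C&B&A\end{pmatrix},\] $A,B,C$ smooth functions with $A>C>B>0$. Let $P$ be the almost product structure with component matrix having rows $(0,0,1,0),(0,0,0,1),(1,0,0,0),(0,1,0,0)$. Then $(M,g,P)$ belongs to the class $\overline{\mathcal{W}}_6$ if and only if \[A_4-C_2=A_2-C_4,\quad B_4=B_2,\quad A_3-C_1=A_1-C_3,\quad B_3=B_1,\] where $A_i=\partial A/\partial x^i$, $B_i=\partial B/\partial x^i$, $C_i=\partial C/\partial x^i$.
   Context: Let $\nabla$ be the Levi-Civita connection of $g$, $F(x,y,z)=g((\nabla_xP)y,z)$, and $\theta(x)=g^{ij}F(e_i,e_j,x)$ with $(g^{ij})$ the inverse of $(g_{ij})$. The manifold $(M,g,P)$ belongs to the class $\overline{\mathcal{W}}_6$ (a basic class of Naveira's classification) if for all vector fields $x,y,z$: \[F(x,y,z)=\tfrac14\Big[\big(g(x,y)-g(x,Py)\big)\theta(z)+\big(g(x,z)-g(x,Pz)\big)\theta(y)\Big],\qquad \theta(Pz)=\theta(z).\] *)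

theory Defs
  imports "HOL-Analysis.Analysis"
begin

text \<open>Points of the coordinate domain are points of real^4; the coordinate index type is 4,
  the numerals 1,2,3,4 of this type index the coordinates x^1,...,x^4 (e_i = axis i 1).\<close>

definition partial :: "4 \<Rightarrow> (real^4 \<Rightarrow> real) \<Rightarrow> real^4 \<Rightarrow> real" where
  "partial j f p = deriv (\<lambda>t. f (p + t *\<^sub>R axis j 1)) 0"

fun iter_partial :: "4 list \<Rightarrow> (real^4 \<Rightarrow> real) \<Rightarrow> real^4 \<Rightarrow> real" where
  "iter_partial [] f = f"
| "iter_partial (j # js) f = partial j (iter_partial js f)"

definition smooth_on :: "(real^4) set \<Rightarrow> (real^4 \<Rightarrow> real) \<Rightarrow> bool" where
  "smooth_on U f \<longleftrightarrow>
     (\<forall>js. continuous_on U (iter_partial js f) \<and>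
        (\<forall>j. \<forall>p\<in>U. (\<lambda>t. iter_partial js f (p + t *\<^sub>R axis j 1)) differentiable (at 0)))"

definition gmat :: "(real^4 \<Rightarrow> real) \<Rightarrow> (real^4 \<Rightarrow> real) \<Rightarrow> (real^4 \<Rightarrow> real) \<Rightarrow> real^4 \<Rightarrow> real^4^4" where
  "gmat A B C p = vector [vector [A p, B p, C p, B p],
                          vector [B p, A p, B p, C p],
                          vector [C p, B p, A p, B p],
                          vector [B p, C p, B p, A p]]"

definition ginv :: "(real^4 \<Rightarrow> real) \<Rightarrow> (real^4 \<Rightarrow> real) \<Rightarrow> (real^4 \<Rightarrow> real) \<Rightarrow> real^4 \<Rightarrow> real^4^4" where
  "ginv A B C p = matrix_inv (gmat A B C p)"

text \<open>Component matrix of P: Pmat $ k $ j = P^k_j, i.e. P e_j = sum_k P^k_j e_k.\<close>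
definition Pmat :: "real^4^4" where
  "Pmat = vector [vector [0, 0, 1, 0],
                  vector [0, 0, 0, 1],
                  vector [1, 0, 0, 0],
                  vector [0, 1, 0, 0]]"

text \<open>Christoffel symbols of the second kind of the Levi-Civita connection:
  nabla_{e_i} e_j = sum_k Gamma^k_ij e_k.\<close>
definition Gamma :: "(real^4 \<Rightarrow> real) \<Rightarrow> (real^4 \<Rightarrow> real) \<Rightarrow> (real^4 \<Rightarrow> real) \<Rightarrow> real^4 \<Rightarrow> 4 \<Rightarrow> 4 \<Rightarrow> 4 \<Rightarrow> real" where
  "Gamma A B C p k i j =
     (\<Sum>l\<in>UNIV. ginv A B C p $ k $ l *
        (partial i (\<lambda>q. gmat A B C q $ j $ l) p
         + partial j (\<lambda>q. gmat A B C q $ i $ l) p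
         - partial l (\<lambda>q. gmat A B C q $ i $ j) p) / 2)"

text \<open>Components of nabla P: ((nabla_{e_i} P) e_j)^k
  = nabla_{e_i}(P e_j) - P(nabla_{e_i} e_j)   (P has constant components).\<close>
definition nablaP :: "(real^4 \<Rightarrow> real) \<Rightarrow> (real^4 \<Rightarrow> real) \<Rightarrow> (real^4 \<Rightarrow> real) \<Rightarrow> real^4 \<Rightarrow> 4 \<Rightarrow> 4 \<Rightarrow> 4 \<Rightarrow> real" where
  "nablaP A B C p i j k =
     (\<Sum>m\<in>UNIV. Gamma A B C p k i m * Pmat $ m $ j) - (\<Sum>m\<in>UNIV. Pmat $ k $ m * Gamma A B C p m i j)"

definition gmetric :: "(real^4 \<Rightarrow> real) \<Rightarrow> (real^4 \<Rightarrow> real) \<Rightarrow> (real^4 \<Rightarrow> real) \<Rightarrow> real^4 \<Rightarrow> real^4 \<Rightarrow> real^4 \<Rightarrow> real" where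
  "gmetric A B C p x y = (\<Sum>i\<in>UNIV. \<Sum>j\<in>UNIV. gmat A B C p $ i $ j * x $ i * y $ j)"

definition Pv :: "real^4 \<Rightarrow> real^4" where
  "Pv x = Pmat *v x"

definition Ften :: "(real^4 \<Rightarrow> real) \<Rightarrow> (real^4 \<Rightarrow> real) \<Rightarrow> (real^4 \<Rightarrow> real) \<Rightarrow> real^4 \<Rightarrow> real^4 \<Rightarrow> real^4 \<Rightarrow> real^4 \<Rightarrow> real" where
  "Ften A B C p x y z =
     gmetric A B C p (\<chi> l. \<Sum>i\<in>UNIV. \<Sum>j\<in>UNIV. x $ i * y $ j * nablaP A B C p i j l) z"

definition theta :: "(real^4 \<Rightarrow> real) \<Rightarrow> (real^4 \<Rightarrow> real) \<Rightarrow> (real^4 \<Rightarrow> real) \<Rightarrow> real^4 \<Rightarrow> real^4 \<Rightarrow> real" where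
  "theta A B C p x =
     (\<Sum>i\<in>UNIV. \<Sum>j\<in>UNIV. ginv A B C p $ i $ j * Ften A B C p (axis i 1) (axis j 1) x)"

text \<open>(M,g,P) in class W6-bar, with M the open coordinate domain U.\<close>
definition in_W6 :: "(real^4) set \<Rightarrow> (real^4 \<Rightarrow> real) \<Rightarrow> (real^4 \<Rightarrow> real) \<Rightarrow> (real^4 \<Rightarrow> real) \<Rightarrow> bool" where
  "in_W6 U A B C \<longleftrightarrow>
     (\<forall>p\<in>U. \<forall>x y z.
        Ften A B C p x y z =
          1/4 * ((gmetric A B C p x y - gmetric A B C p x (Pv y)) * theta A B C p z
               + (gmetric A B C p x z - gmetric A B C p x (Pv z)) * theta A B C p y)
        \<and> theta A B C p (Pv z) = theta A B C p z)"

end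

theory Submission
  imports Defs
begin


lemma vec4 [simp]:
  "vector [x,y,z,w] $ (1::4) = x" "vector [x,y,z,w] $ (2::4) = y"
  "vector [x,y,z,w] $ (3::4) = z" "vector [x,y,z,w] $ (4::4) = (w::'a::zero)"
  unfolding vector_def by simp_all

definition circ :: "real \<Rightarrow> real \<Rightarrow> real \<Rightarrow> real^4^4" where
  "circ a b c = vector [vector [a, b, c, b], vector [b, a, b, c], vector [c, b, a, b], vector [b, c, b, a]]"

definition "pp a b c = (1/(a+2*b+c) + 1/(a-2*b+c) + 2/(a-c))/4"
definition "qq a b c = (1/(a+2*b+c) - 1/(a-2*b+c))/4"
definition "rr a b c = (1/(a+2*b+c) + 1/(a-2*b+c) - 2/(a-c))/4"

lemma circ_mult: "circ a b c ** circ a' b' c' =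
   circ (a*a'+2*b*b'+c*c') (a*b'+b*a'+b*c'+c*b') (a*c'+2*b*b'+c*a')"
  by (simp add: circ_def vec_eq_iff forall_4 matrix_matrix_mult_def sum_4 algebra_simps)

lemma circ_one: "circ 1 0 0 = mat 1"
  by (simp add: circ_def vec_eq_iff forall_4 mat_def)

lemma inv_eqs:
  fixes a b c :: real assumes "a > c" "c > b" "b > 0"
  shows "a*pp a b c+2*b*qq a b c+c*rr a b c = 1"
    "a*qq a b c+b*pp a b c+b*rr a b c+c*qq a b c = 0"
    "a*rr a b c+2*b*qq a b c+c*pp a b c = 0"
proof -
  define u v w where "u = a+2*b+c" "v = a-2*b+c" "w = a-c"
  define iu iv iw where "iu = 1/u" "iv = 1/v" "iw = 1/w"
  have h: "u * iu = 1" "v * iv = 1" "w * iw = 1" unfolding iu_iv_iw_def u_v_w_def using assms by auto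
  have e: "a = (u+v+2*w)/4" "b = (u-v)/4" "c = (u+v-2*w)/4" unfolding u_v_w_def by auto
  have p: "pp a b c = (iu+iv+2*iw)/4" "qq a b c = (iu-iv)/4" "rr a b c = (iu+iv-2*iw)/4"
    unfolding pp_def qq_def rr_def u_v_w_def iu_iv_iw_def by auto
  have "a*pp a b c+2*b*qq a b c+c*rr a b c = (u * iu + v * iv + 2*(w * iw))/4"
    unfolding p unfolding e by (simp add: field_simps)
  then show "a*pp a b c+2*b*qq a b c+c*rr a b c = 1" using h by simp
  have "a*qq a b c+b*pp a b c+b*rr a b c+c*qq a b c = (u * iu - v * iv)/4"
    unfolding p unfolding e by (simp add: field_simps)
  then show "a*qq a b c+b*pp a b c+b*rr a b c+c*qq a b c = 0" using h by simp
  have "a*rr a b c+2*b*qq a b c+c*pp a b c = (u * iu + v * iv - 2*(w * iw))/4"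
    unfolding p unfolding e by (simp add: field_simps)
  then show "a*rr a b c+2*b*qq a b c+c*pp a b c = 0" using h by simp
qed

lemma matrix_inv_eq:
  fixes M N :: "real^4^4"
  assumes "M ** N = mat 1" "N ** M = mat 1"
  shows "matrix_inv M = N"
proof -
  let ?N = "matrix_inv M"
  have "M ** ?N = mat 1 \<and> ?N ** M = mat 1"
    unfolding matrix_inv_def by (rule someI[of _ N]) (use assms in auto)
  then have "?N = ?N ** (M ** N)" "?N ** M = mat 1" using assms by auto
  then show ?thesis by (simp add: matrix_mul_assoc)
qed




definition Tt where "Tt A B C p i m b = (partial i (\<lambda>q. gmat A B C q $ m $ b) p + partial m (\<lambda>q. gmat A B C q $ i $ b) p - partial b (\<lambda>q. gmat A B C q $ i $ m) p) / 2"

definition Kt where "Kt A B C p i j b = (\<Sum>m\<in>UNIV. Pmat $ m $ j * Tt A B C p i m b) - (\<Sum>a\<in>UNIV. Pmat $ b $ a * Tt A B C p i j a)"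

lemma G1: "(\<Sum>a\<in>A. f a * (\<Sum>l\<in>L. g a l * s l)) = (\<Sum>l\<in>L. (\<Sum>a\<in>A. f a * g a l) * (s l :: real))"
  by (simp add: sum_distrib_left sum_distrib_right mult.assoc sum.swap[of _ A L])
lemma G2: "(\<Sum>a\<in>A. f a * (\<Sum>i\<in>I. \<Sum>j\<in>J. h i j * n i j a)) = (\<Sum>i\<in>I. \<Sum>j\<in>J. h i j * (\<Sum>a\<in>A. f a * (n i j a :: real)))"
proof -
  have "(\<Sum>a\<in>A. f a * (\<Sum>i\<in>I. \<Sum>j\<in>J. h i j * n i j a)) = (\<Sum>a\<in>A. \<Sum>i\<in>I. \<Sum>j\<in>J. f a * (h i j * n i j a))"
    by (simp add: sum_distrib_left)
  also have "\<dots> = (\<Sum>i\<in>I. \<Sum>a\<in>A. \<Sum>j\<in>J. f a * (h i j * n i j a))" by (rule sum.swap)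
  also have "\<dots> = (\<Sum>i\<in>I. \<Sum>j\<in>J. \<Sum>a\<in>A. f a * (h i j * n i j a))" by (simp add: sum.swap[of _ A J])
  also have "\<dots> = (\<Sum>i\<in>I. \<Sum>j\<in>J. h i j * (\<Sum>a\<in>A. f a * (n i j a :: real)))"
    by (simp add: sum_distrib_left mult_ac)
  finally show ?thesis .
qed
lemma G3: "(\<Sum>a\<in>A. \<Sum>b\<in>B. g a b * v a * z b) = (\<Sum>b\<in>B. z b * (\<Sum>a\<in>A. g a b * (v a :: real)))"
  by (simp add: sum_distrib_left mult_ac sum.swap[of _ A B])

lemma gmat_circ: "gmat A B C p = circ (A p) (B p) (C p)"
  by (simp add: gmat_def circ_def)

lemma gmat_sym: "gmat A B C p $ a $ b = gmat A B C p $ b $ a"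
  using exhaust_4[of a] exhaust_4[of b] by (auto simp: gmat_def)

lemma gP_comm: "(\<Sum>a\<in>UNIV. gmat A B C p $ a $ b * Pmat $ a $ m) = (\<Sum>a\<in>UNIV. Pmat $ b $ a * gmat A B C p $ a $ m)"
  using exhaust_4[of m] exhaust_4[of b] by (auto simp: gmat_def Pmat_def sum_4)

lemma L5:
  assumes inv: "gmat A B C p ** ginv A B C p = mat 1"
  shows "(\<Sum>a\<in>UNIV. gmat A B C p $ a $ b * Gamma A B C p a i m) = Tt A B C p i m b"
proof -
  define S where "S l = (partial i (\<lambda>q. gmat A B C q $ m $ l) p + partial m (\<lambda>q. gmat A B C q $ i $ l) p - partial l (\<lambda>q. gmat A B C q $ i $ m) p) / 2" for l
  have "(\<Sum>a\<in>UNIV. gmat A B C p $ a $ b * Gamma A B C p a i m)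
      = (\<Sum>a\<in>UNIV. \<Sum>l\<in>UNIV. gmat A B C p $ b $ a * (ginv A B C p $ a $ l * S l))"
    unfolding Gamma_def S_def by (simp add: sum_distrib_left gmat_sym[of A B C p _ b])
  also have "\<dots> = (\<Sum>l\<in>UNIV. (\<Sum>a\<in>UNIV. gmat A B C p $ b $ a * ginv A B C p $ a $ l) * S l)"
    by (simp add: G1 flip: sum_distrib_left)
  also have "\<dots> = (\<Sum>l\<in>UNIV. (mat 1 :: real^4^4) $ b $ l * S l)"
    by (simp add: inv[symmetric] matrix_matrix_mult_def)
  also have "\<dots> = (\<Sum>l\<in>UNIV. if b = l then S l else 0)" by (rule sum.cong) (auto simp: mat_def)
  also have "\<dots> = S b" by (simp add: sum.delta)
  finally show ?thesis by (simp add: S_def Tt_def)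
qed

lemma L5':
  assumes inv: "gmat A B C p ** ginv A B C p = mat 1"
  shows "(\<Sum>a\<in>UNIV. gmat A B C p $ b $ a * Gamma A B C p a i m) = Tt A B C p i m b"
  using L5[OF inv] by (simp add: gmat_sym[of A B C p b])

lemma gN:
  assumes inv: "gmat A B C p ** ginv A B C p = mat 1"
  shows "(\<Sum>a\<in>UNIV. gmat A B C p $ a $ b * nablaP A B C p i j a) = Kt A B C p i j b"
proof -
  have 1: "(\<Sum>a\<in>UNIV. gmat A B C p $ a $ b * (\<Sum>m\<in>UNIV. Gamma A B C p a i m * Pmat $ m $ j))
        = (\<Sum>m\<in>UNIV. Pmat $ m $ j * Tt A B C p i m b)"
  proof -
    have "(\<Sum>a\<in>UNIV. gmat A B C p $ a $ b * (\<Sum>m\<in>UNIV. Gamma A B C p a i m * Pmat $ m $ j))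
        = (\<Sum>m\<in>UNIV. Pmat $ m $ j * (\<Sum>a\<in>UNIV. gmat A B C p $ a $ b * Gamma A B C p a i m))"
      by (simp add: G1 mult.commute)
    then show ?thesis by (simp add: L5[OF inv])
  qed
  have 2: "(\<Sum>a\<in>UNIV. gmat A B C p $ a $ b * (\<Sum>m\<in>UNIV. Pmat $ a $ m * Gamma A B C p m i j))
        = (\<Sum>a\<in>UNIV. Pmat $ b $ a * Tt A B C p i j a)"
  proof -
    have "(\<Sum>a\<in>UNIV. gmat A B C p $ a $ b * (\<Sum>m\<in>UNIV. Pmat $ a $ m * Gamma A B C p m i j))
        = (\<Sum>m\<in>UNIV. (\<Sum>a\<in>UNIV. gmat A B C p $ a $ b * Pmat $ a $ m) * Gamma A B C p m i j)"
      by (rule G1)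
    also have "\<dots> = (\<Sum>m\<in>UNIV. (\<Sum>a\<in>UNIV. Pmat $ b $ a * gmat A B C p $ a $ m) * Gamma A B C p m i j)"
      by (simp add: gP_comm)
    also have "\<dots> = (\<Sum>a\<in>UNIV. Pmat $ b $ a * (\<Sum>m\<in>UNIV. gmat A B C p $ a $ m * Gamma A B C p m i j))"
      by (rule G1[symmetric])
    finally show ?thesis by (simp add: L5'[OF inv])
  qed
  show ?thesis unfolding nablaP_def Kt_def right_diff_distrib sum_subtractf 1 2 ..
qed

lemma Ften_formula:
  assumes inv: "gmat A B C p ** ginv A B C p = mat 1"
  shows "Ften A B C p x y z = (\<Sum>b\<in>UNIV. z $ b * (\<Sum>i\<in>UNIV. \<Sum>j\<in>UNIV. x $ i * y $ j * Kt A B C p i j b))"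
proof -
  have "Ften A B C p x y z = (\<Sum>b\<in>UNIV. z $ b * (\<Sum>a\<in>UNIV. gmat A B C p $ a $ b *
          (\<Sum>i\<in>UNIV. \<Sum>j\<in>UNIV. x $ i * y $ j * nablaP A B C p i j a)))"
    unfolding Ften_def gmetric_def vec_lambda_beta by (rule G3)
  also have "\<dots> = (\<Sum>b\<in>UNIV. z $ b * (\<Sum>i\<in>UNIV. \<Sum>j\<in>UNIV. x $ i * y $ j *
          (\<Sum>a\<in>UNIV. gmat A B C p $ a $ b * nablaP A B C p i j a)))"
    by (simp only: G2)
  finally show ?thesis by (simp add: gN[OF inv])
qed




lemma ginv_circ:
  assumes "A p > C p" "C p > B p" "B p > 0"
  shows "ginv A B C p = circ (pp (A p) (B p) (C p)) (qq (A p) (B p) (C p)) (rr (A p) (B p) (C p))"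
  unfolding ginv_def gmat_circ
  apply (rule matrix_inv_eq)
  using inv_eqs[OF assms] by (simp_all add: circ_mult circ_one mult_ac add_ac)

lemma ginv_inv:
  assumes "A p > C p" "C p > B p" "B p > 0"
  shows "gmat A B C p ** ginv A B C p = mat 1"
  unfolding ginv_circ[where A=A and B=B and C=C and p=p, OF assms] gmat_circ
  using inv_eqs[OF assms] by (simp add: circ_mult circ_one mult_ac add_ac)

lemma axis_sum: "(\<Sum>i'\<in>UNIV. (axis i (1::real)) $ i' * f i') = f i"
proof -
  have "(\<Sum>i'\<in>UNIV. (axis i (1::real)) $ i' * f i') = (\<Sum>i'\<in>UNIV. if i' = i then f i' else 0)"
    by (rule sum.cong) (auto simp: axis_def)
  then show ?thesis by simp
qed

lemma Ften_axis:
  assumes inv: "gmat A B C p ** ginv A B C p = mat 1"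
  shows "Ften A B C p (axis i 1) (axis j 1) z = (\<Sum>b\<in>UNIV. z $ b * Kt A B C p i j b)"
proof -
  have "(\<Sum>i'\<in>UNIV. \<Sum>j'\<in>UNIV. axis i 1 $ i' * axis j 1 $ j' * Kt A B C p i' j' b) = Kt A B C p i j b" for b
    by (simp add: mult.assoc sum_distrib_left[symmetric] axis_sum)
  then show ?thesis unfolding Ften_formula[OF inv] by simp
qed

lemma theta_formula:
  assumes inv: "gmat A B C p ** ginv A B C p = mat 1"
  shows "theta A B C p z = (\<Sum>b\<in>UNIV. z $ b * (\<Sum>i\<in>UNIV. \<Sum>j\<in>UNIV. ginv A B C p $ i $ j * Kt A B C p i j b))"
  unfolding theta_def Ften_axis[OF inv] by (rule G2[symmetric])




lemma Pv_nth [simp]: "Pv y $ 1 = y $ 3" "Pv y $ 2 = y $ 4" "Pv y $ 3 = y $ 1" "Pv y $ 4 = y $ 2"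
  by (simp_all add: Pv_def Pmat_def matrix_vector_mult_def sum_4)

lemma gmetric_expl: "gmetric A B C p x y =
  A p * (x$1*y$1 + x$2*y$2 + x$3*y$3 + x$4*y$4)
  + B p * (x$1*y$2 + x$1*y$4 + x$2*y$1 + x$2*y$3 + x$3*y$2 + x$3*y$4 + x$4*y$1 + x$4*y$3)
  + C p * (x$1*y$3 + x$2*y$4 + x$3*y$1 + x$4*y$2)"
  by (simp add: gmetric_def sum_4 gmat_def algebra_simps)

lemma theta_expl:
  assumes pos: "A p > C p" "C p > B p" "B p > 0"
  defines "pv \<equiv> pp (A p) (B p) (C p)" and "qv \<equiv> qq (A p) (B p) (C p)" and "rv \<equiv> rr (A p) (B p) (C p)"
  shows "theta A B C p z =
     z$1 * (2*pv*(partial 3 A p - partial 1 C p) - 2*rv*(partial 1 A p - partial 3 C p) - 4*qv*(partial 1 B p - partial 3 B p))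
   + z$2 * (2*pv*(partial 4 A p - partial 2 C p) - 2*rv*(partial 2 A p - partial 4 C p) - 4*qv*(partial 2 B p - partial 4 B p))
   + z$3 * (2*pv*(partial 1 A p - partial 3 C p) - 2*rv*(partial 3 A p - partial 1 C p) + 4*qv*(partial 1 B p - partial 3 B p))
   + z$4 * (2*pv*(partial 2 A p - partial 4 C p) - 2*rv*(partial 4 A p - partial 2 C p) + 4*qv*(partial 2 B p - partial 4 B p))"
  unfolding theta_formula[OF ginv_inv[where A=A and B=B and C=C and p=p, OF pos]]
    ginv_circ[where A=A and B=B and C=C and p=p, OF pos] pv_def qv_def rv_def
  by (simp add: sum_4 circ_def Kt_def Tt_def Pmat_def gmat_def field_simps)




definition smat :: "real^4^4" where
  "smat = vector [vector [1,0,-1,0], vector [0,1,0,-1], vector [-1,0,1,0], vector [0,-1,0,1]]"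

lemma Kcond:
  assumes c1: "partial 1 A p = partial 3 A p - partial 1 C p + partial 3 C p"
    and c2: "partial 2 A p = partial 4 A p - partial 2 C p + partial 4 C p"
    and c3: "partial 3 B p = partial 1 B p"
    and c4: "partial 4 B p = partial 2 B p"
  defines "tv \<equiv> vector [partial 3 A p - partial 1 C p, partial 4 A p - partial 2 C p, partial 3 A p - partial 1 C p, partial 4 A p - partial 2 C p] :: real^4"
  shows "Kt A B C p i j b = 1/2 * (smat$i$j * tv$b + smat$i$b * tv$j)"
proof -
  have "\<forall>i j b. Kt A B C p i j b = 1/2 * (smat$i$j * tv$b + smat$i$b * tv$j)"
    unfolding forall_4 tv_def
    by (simp add: Kt_def Tt_def sum_4 Pmat_def gmat_def smat_def c1 c2 c3 c4 field_simps)
  then show ?thesis by blast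
qed




lemma generic_tri:
  fixes s :: "4 \<Rightarrow> 4 \<Rightarrow> real" and t :: "4 \<Rightarrow> real"
  shows "(\<Sum>b\<in>UNIV. z $ b * (\<Sum>i\<in>UNIV. \<Sum>j\<in>UNIV. x $ i * y $ j * (1/2 * (s i j * t b + s i b * t j))))
    = 1/2 * ((\<Sum>i\<in>UNIV. \<Sum>j\<in>UNIV. x $ i * y $ j * s i j) * (\<Sum>b\<in>UNIV. z $ b * t b)
           + (\<Sum>i\<in>UNIV. \<Sum>j\<in>UNIV. x $ i * z $ j * s i j) * (\<Sum>b\<in>UNIV. y $ b * t b))"
  by (simp add: sum_4 algebra_simps)

lemma gdiff: "gmetric A B C p x y - gmetric A B C p x (Pv y) = (A p - C p) * (\<Sum>i\<in>UNIV. \<Sum>j\<in>UNIV. x $ i * y $ j * smat $ i $ j)"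
  by (simp add: gmetric_expl sum_4 smat_def algebra_simps)

lemma pr_one:
  fixes a b c :: real
  assumes "a > c" shows "(a - c) * (pp a b c - rr a b c) = 1"
proof -
  define t where "t = 1/(a-c)"
  have t1: "(a-c)*t = 1" using assms by (simp add: t_def)
  have t2: "2/(a-c) = 2*t" by (simp add: t_def)
  have "pp a b c - rr a b c = (2*t + 2*t)/4"
    unfolding pp_def rr_def t2 by (simp add: diff_divide_distrib[symmetric] algebra_simps)
  also have "\<dots> = t" by simp
  finally show ?thesis using t1 by simp
qed

lemma pr_pos:
  assumes "a > (c::real)" "c > b" "b > 0" shows "pp a b c + rr a b c > 0"
proof -
  define X Y where "X = 2/(a+2*b+c)" "Y = 2/(a-2*b+c)"
  have "a+2*b+c > 0" "a-2*b+c > 0" using assms by auto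
  then have "X > 0" "Y > 0" unfolding X_Y_def by auto
  moreover have "pp a b c + rr a b c = (X + Y)/4"
    unfolding pp_def rr_def X_Y_def by (simp add: add_divide_distrib[symmetric] algebra_simps)
  ultimately show ?thesis by simp
qed

lemma final_alg:
  fixes u w S1 S2 T1 T2 :: real
  assumes "u * w = 1"
  shows "1/2*(S1*T1+S2*T2) = 1/4*((u*S1)*(2*w*T1) + (u*S2)*(2*w*T2))"
proof -
  have "1/4*((u*S1)*(2*w*T1) + (u*S2)*(2*w*T2)) = (u*w)*(1/2*(S1*T1+S2*T2))"
    by (simp add: algebra_simps)
  then show ?thesis using assms by simp
qed
lemma axis_nth1 [simp]: "axis i (1::real) $ j = (if j = i then 1 else 0)"
  by (simp add: axis_def)

lemma pointwise:
  assumes pos: "A p > C p" "C p > B p" "B p > 0"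
  shows "(\<forall>x y z.
        Ften A B C p x y z =
          1/4 * ((gmetric A B C p x y - gmetric A B C p x (Pv y)) * theta A B C p z
               + (gmetric A B C p x z - gmetric A B C p x (Pv z)) * theta A B C p y)
        \<and> theta A B C p (Pv z) = theta A B C p z) \<longleftrightarrow>
     (partial 4 A p - partial 2 C p = partial 2 A p - partial 4 C p
          \<and> partial 4 B p = partial 2 B p
          \<and> partial 3 A p - partial 1 C p = partial 1 A p - partial 3 C p
          \<and> partial 3 B p = partial 1 B p)" (is "?L \<longleftrightarrow> ?R")
proof
  have inv: "gmat A B C p ** ginv A B C p = mat 1"
    by (rule ginv_inv[where A=A and B=B and C=C and p=p, OF pos])
  note th = theta_expl[where A=A and B=B and C=C and p=p, OF pos]
  assume L: ?L
  have e1: "partial 3 B p = partial 1 B p"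
    using L[rule_format, of "axis 2 1" "axis 1 1" "axis 1 1"]
    by (simp add: Ften_axis[OF inv] sum_4 Kt_def Tt_def Pmat_def gmat_def gmetric_expl)
  have e2: "partial 4 B p = partial 2 B p"
    using L[rule_format, of "axis 1 1" "axis 2 1" "axis 2 1"]
    by (simp add: Ften_axis[OF inv] sum_4 Kt_def Tt_def Pmat_def gmat_def gmetric_expl)
  have pr: "pp (A p) (B p) (C p) + rr (A p) (B p) (C p) > 0" using pr_pos pos by blast
  have e3: "partial 3 A p - partial 1 C p = partial 1 A p - partial 3 C p"
  proof -
    have "2*pp (A p) (B p) (C p)*(partial 1 A p - partial 3 C p) - 2*rr (A p) (B p) (C p)*(partial 3 A p - partial 1 C p)
       = 2*pp (A p) (B p) (C p)*(partial 3 A p - partial 1 C p) - 2*rr (A p) (B p) (C p)*(partial 1 A p - partial 3 C p)"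
      using L[rule_format, of _ _ "axis 1 1"] e1 by (simp add: th)
    then have "(pp (A p) (B p) (C p) + rr (A p) (B p) (C p)) * ((partial 3 A p - partial 1 C p) - (partial 1 A p - partial 3 C p)) = 0"
      by (simp add: algebra_simps)
    then show ?thesis using pr by simp
  qed
  have e4: "partial 4 A p - partial 2 C p = partial 2 A p - partial 4 C p"
  proof -
    have "2*pp (A p) (B p) (C p)*(partial 2 A p - partial 4 C p) - 2*rr (A p) (B p) (C p)*(partial 4 A p - partial 2 C p)
       = 2*pp (A p) (B p) (C p)*(partial 4 A p - partial 2 C p) - 2*rr (A p) (B p) (C p)*(partial 2 A p - partial 4 C p)"
      using L[rule_format, of _ _ "axis 2 1"] e2 by (simp add: th)
    then have "(pp (A p) (B p) (C p) + rr (A p) (B p) (C p)) * ((partial 4 A p - partial 2 C p) - (partial 2 A p - partial 4 C p)) = 0"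
      by (simp add: algebra_simps)
    then show ?thesis using pr by simp
  qed
  show ?R using e1 e2 e3 e4 by blast
next
  have inv: "gmat A B C p ** ginv A B C p = mat 1"
    by (rule ginv_inv[where A=A and B=B and C=C and p=p, OF pos])
  note th = theta_expl[where A=A and B=B and C=C and p=p, OF pos]
  assume R: ?R
  have c1: "partial 1 A p = partial 3 A p - partial 1 C p + partial 3 C p"
    and c2: "partial 2 A p = partial 4 A p - partial 2 C p + partial 4 C p"
    and c3: "partial 3 B p = partial 1 B p"
    and c4: "partial 4 B p = partial 2 B p" using R by linarith+
  define tv where "tv = (vector [partial 3 A p - partial 1 C p, partial 4 A p - partial 2 C p, partial 3 A p - partial 1 C p, partial 4 A p - partial 2 C p] :: real^4)"
  define w where "w = pp (A p) (B p) (C p) - rr (A p) (B p) (C p)"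
  have w1: "(A p - C p) * w = 1" unfolding w_def using pos by (intro pr_one) auto
  have thc: "theta A B C p z = 2 * w * (\<Sum>b\<in>UNIV. z $ b * tv $ b)" for z
    unfolding th w_def tv_def by (simp add: sum_4 c1 c2 c3 c4 algebra_simps)
  have Fc: "Ften A B C p x y z = 1/2 * ((\<Sum>i\<in>UNIV. \<Sum>j\<in>UNIV. x $ i * y $ j * smat $ i $ j) * (\<Sum>b\<in>UNIV. z $ b * tv $ b)
           + (\<Sum>i\<in>UNIV. \<Sum>j\<in>UNIV. x $ i * z $ j * smat $ i $ j) * (\<Sum>b\<in>UNIV. y $ b * tv $ b))" for x y z
    unfolding Ften_formula[OF inv] Kcond[OF c1 c2 c3 c4] tv_def[symmetric] by (rule generic_tri)
  show ?L
  proof (intro allI conjI)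
    fix x y z
    show "Ften A B C p x y z =
          1/4 * ((gmetric A B C p x y - gmetric A B C p x (Pv y)) * theta A B C p z
               + (gmetric A B C p x z - gmetric A B C p x (Pv z)) * theta A B C p y)"
      unfolding Fc gdiff thc by (rule final_alg[OF w1])
    show "theta A B C p (Pv z) = theta A B C p z"
      unfolding thc by (simp add: sum_4 tv_def algebra_simps)
  qed
qed


theorem corollary3p7:
  fixes U :: "(real^4) set" and A B C :: "real^4 \<Rightarrow> real"
  assumes "open U"
    and "smooth_on U A" and "smooth_on U B" and "smooth_on U C"
    and "\<forall>p\<in>U. A p > C p \<and> C p > B p \<and> B p > 0"
  shows "in_W6 U A B C \<longleftrightarrow>
    (\<forall>p\<in>U. partial 4 A p - partial 2 C p = partial 2 A p - partial 4 C p
          \<and> partial 4 B p = partial 2 B p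
          \<and> partial 3 A p - partial 1 C p = partial 1 A p - partial 3 C p
          \<and> partial 3 B p = partial 1 B p)"
proof -
  have eq: "(\<forall>x y z.
        Ften A B C p x y z =
          1/4 * ((gmetric A B C p x y - gmetric A B C p x (Pv y)) * theta A B C p z
               + (gmetric A B C p x z - gmetric A B C p x (Pv z)) * theta A B C p y)
        \<and> theta A B C p (Pv z) = theta A B C p z) \<longleftrightarrow>
     (partial 4 A p - partial 2 C p = partial 2 A p - partial 4 C p
          \<and> partial 4 B p = partial 2 B p
          \<and> partial 3 A p - partial 1 C p = partial 1 A p - partial 3 C p
          \<and> partial 3 B p = partial 1 B p)" if "p \<in> U" for p
    using assms(5) that by (intro pointwise) auto
  show ?thesis unfolding in_W6_def using eq by blast
qed

end
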